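(* Let $f:\{0,1\}^n\to\{0,1\}$ be a non-constant total symmetric Boolean function and let $t_f$ be as defined in the context. Then \[ \lambda(f) \ge \sqrt{t_f\,(n+1-t_f)}, \] and consequently $\lambda(f) = \Omega(\sqrt{t_f\cdot n})$.
   Context: A Boolean function $f:\{0,1\}^n\to\{0,1\}$ is symmetric if $f(x)$ depends only on the Hamming weight $|x|$ (number of ones). For such $f$, $t_f$ is the minimum nonnegative integer $t$ such that $f$ is constant on all inputs $x$ with $t\le |x|\le n-t$ (the condition being vacuous if this range is empty). The sensitivity graph of $f$ has vertex set $\{0,1\}^n$, with $x,y$ adjacent iff they differ in exactly one coordinate and $f(x)\neq f(y)$; $A_f$ is its adjacency matrix, and the spectral sensitivity is $\lambda(f)=\|A_f\|$, the spectral norm of $A_f$. *)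

theory Defs
  imports Complex_Main
begin

text \<open>Inputs x in {0,1}^n are encoded as subsets of {..<n} (the set of coordinates equal to 1);
  the Hamming weight is card x. A Boolean function is f :: nat set \<Rightarrow> bool, only its values
  on subsets of {..<n} matter.\<close>

definition cube :: "nat \<Rightarrow> nat set set" where
  "cube n = Pow {..<n}"

definition symmetric_bf :: "nat \<Rightarrow> (nat set \<Rightarrow> bool) \<Rightarrow> bool" where
  "symmetric_bf n f \<longleftrightarrow> (\<forall>x\<in>cube n. \<forall>y\<in>cube n. card x = card y \<longrightarrow> f x = f y)"

definition nonconstant_bf :: "nat \<Rightarrow> (nat set \<Rightarrow> bool) \<Rightarrow> bool" where
  "nonconstant_bf n f \<longleftrightarrow> (\<exists>x\<in>cube n. \<exists>y\<in>cube n. f x \<noteq> f y)"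

definition t_f :: "nat \<Rightarrow> (nat set \<Rightarrow> bool) \<Rightarrow> nat" where
  "t_f n f = (LEAST t. \<forall>x\<in>cube n. \<forall>y\<in>cube n.
      t \<le> card x \<and> card x + t \<le> n \<and> t \<le> card y \<and> card y + t \<le> n \<longrightarrow> f x = f y)"

definition sens_adj :: "nat \<Rightarrow> (nat set \<Rightarrow> bool) \<Rightarrow> nat set \<Rightarrow> nat set \<Rightarrow> real" where
  "sens_adj n f x y =
     (if x \<in> cube n \<and> y \<in> cube n \<and> card ((x - y) \<union> (y - x)) = 1 \<and> f x \<noteq> f y then 1 else 0)"

definition spectral_sensitivity :: "nat \<Rightarrow> (nat set \<Rightarrow> bool) \<Rightarrow> real" where
  "spectral_sensitivity n f = Sup {sqrt (\<Sum>x\<in>cube n. (\<Sum>y\<in>cube n. sens_adj n f x y * v y)\<^sup>2) | v.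
       (\<Sum>x\<in>cube n. (v x)\<^sup>2) = 1}"

end

theory Submission
  imports Defs
begin

lemma cube_finite: "finite (cube n)" by (simp add: cube_def)

lemma cube_card_le: "x \<in> cube n \<Longrightarrow> card x \<le> n"
  unfolding cube_def by (metis PowD card_lessThan card_mono finite_lessThan)

lemma cube_fin: "x \<in> cube n \<Longrightarrow> finite x"
  unfolding cube_def by (meson PowD finite_lessThan finite_subset)

lemma sup_ge:
  assumes unit: "(\<Sum>x\<in>cube n. (v x)\<^sup>2) = 1"
  shows "sqrt (\<Sum>x\<in>cube n. (\<Sum>y\<in>cube n. sens_adj n f x y * v y)\<^sup>2) \<le> spectral_sensitivity n f"
proof -
  define N where "N = real (card (cube n))"
  have bnd: "sqrt (\<Sum>x\<in>cube n. (\<Sum>y\<in>cube n. sens_adj n f x y * w y)\<^sup>2) \<le> sqrt (N * N\<^sup>2)"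
    if wu: "(\<Sum>x\<in>cube n. (w x)\<^sup>2) = 1" for w
  proof -
    have wy: "\<bar>w y\<bar> \<le> 1" if "y \<in> cube n" for y
    proof -
      have "(w y)\<^sup>2 \<le> (\<Sum>x\<in>cube n. (w x)\<^sup>2)"
        by (rule member_le_sum) (auto simp: that cube_finite)
      then have "(w y)\<^sup>2 \<le> 1" using wu by simp
      then show ?thesis by (simp add: abs_square_le_1)
    qed
    have ax: "\<bar>\<Sum>y\<in>cube n. sens_adj n f x y * w y\<bar> \<le> N" for x
    proof -
      have "\<bar>\<Sum>y\<in>cube n. sens_adj n f x y * w y\<bar> \<le> (\<Sum>y\<in>cube n. \<bar>sens_adj n f x y * w y\<bar>)"
        by (rule sum_abs)
      also have "\<dots> \<le> (\<Sum>y\<in>cube n. 1)"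
      proof (rule sum_mono)
        fix y assume "y \<in> cube n"
        then have "\<bar>w y\<bar> \<le> 1" by (rule wy)
        then show "\<bar>sens_adj n f x y * w y\<bar> \<le> 1"
          by (auto simp: sens_adj_def abs_mult)
      qed
      finally show ?thesis by (simp add: N_def)
    qed
    have "(\<Sum>x\<in>cube n. (\<Sum>y\<in>cube n. sens_adj n f x y * w y)\<^sup>2) \<le> (\<Sum>x\<in>cube n. N\<^sup>2)"
    proof (rule sum_mono)
      fix x
      have "\<bar>\<Sum>y\<in>cube n. sens_adj n f x y * w y\<bar>\<^sup>2 \<le> N\<^sup>2"
        by (rule power_mono[OF ax]) simp
      then show "(\<Sum>y\<in>cube n. sens_adj n f x y * w y)\<^sup>2 \<le> N\<^sup>2" by simp
    qed
    also have "\<dots> = N * N\<^sup>2" by (simp add: N_def)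
    finally show ?thesis by simp
  qed
  show ?thesis
    unfolding spectral_sensitivity_def
  proof (rule cSup_upper)
    show "sqrt (\<Sum>x\<in>cube n. (\<Sum>y\<in>cube n. sens_adj n f x y * v y)\<^sup>2)
      \<in> {sqrt (\<Sum>x\<in>cube n. (\<Sum>y\<in>cube n. sens_adj n f x y * v y)\<^sup>2) | v. (\<Sum>x\<in>cube n. (v x)\<^sup>2) = 1}"
      using unit by blast
    show "bdd_above {sqrt (\<Sum>x\<in>cube n. (\<Sum>y\<in>cube n. sens_adj n f x y * v y)\<^sup>2) | v. (\<Sum>x\<in>cube n. (v x)\<^sup>2) = 1}"
      unfolding bdd_above_def using bnd by blast
  qed
qed

lemma spec_nonneg: "0 \<le> spectral_sensitivity n f"
proof -
  define v :: "nat set \<Rightarrow> real" where "v x = (if x = {} then 1 else 0)" for x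
  have e: "{} \<in> cube n" by (simp add: cube_def)
  have "(\<Sum>x\<in>cube n. (v x)\<^sup>2) = (\<Sum>x\<in>cube n. if x = {} then 1 else 0)"
    by (rule sum.cong) (auto simp: v_def)
  also have "\<dots> = 1" using e cube_finite by (simp add: sum.delta)
  finally have "(\<Sum>x\<in>cube n. (v x)\<^sup>2) = 1" .
  from sup_ge[OF this, of f] show ?thesis
    by (meson order_trans real_sqrt_ge_zero sum_nonneg zero_le_power2)
qed

lemma symdiff_one:
  assumes "finite x" "finite y" "card y = k" "card x = Suc k"
  shows "card ((x - y) \<union> (y - x)) = 1 \<longleftrightarrow> y \<subseteq> x"
proof -
  have d: "card ((x - y) \<union> (y - x)) = card (x - y) + card (y - x)"
    by (rule card_Un_disjoint) (use assms in auto)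
  have a: "card (x - y) = card x - card (x \<inter> y)"
    by (metis Diff_Int2 Diff_Int_distrib2 assms(1) card_Diff_subset_Int finite_Int inf.idem inf_le1)
  have b: "card (y - x) = card y - card (x \<inter> y)"
    by (metis Int_commute assms(2) card_Diff_subset_Int finite_Int)
  have c1: "card (x \<inter> y) \<le> card y" by (simp add: assms(2) card_mono)
  show ?thesis
  proof
    assume "card ((x - y) \<union> (y - x)) = 1"
    then have "card (y - x) = 0" using d a b c1 assms by linarith
    then show "y \<subseteq> x" using assms(2) by auto
  next
    assume s: "y \<subseteq> x"
    then have "x \<inter> y = y" by auto
    then show "card ((x - y) \<union> (y - x)) = 1" using d a b assms s by auto
  qed
qed

lemma layer_card: "k \<le> n \<Longrightarrow> card {x\<in>cube n. card x = k} = n choose k"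
proof -
  assume "k \<le> n"
  have "{x\<in>cube n. card x = k} = {B. B \<subseteq> {..<n} \<and> card B = k}" by (auto simp: cube_def)
  then show ?thesis by (simp add: n_subsets)
qed

lemma layer_bound:
  assumes kn: "k < n"
    and diff: "\<forall>x\<in>cube n. \<forall>y\<in>cube n. card x = Suc k \<longrightarrow> card y = k \<longrightarrow> f x \<noteq> f y"
  shows "sqrt (real (Suc k) * real (n - k)) \<le> spectral_sensitivity n f"
proof -
  define C where "C = real (n choose k)"
  have Cpos: "C > 0" using kn by (simp add: C_def)
  define c where "c = 1 / sqrt C"
  define v where "v x = (if card x = k then c else 0)" for x :: "nat set"
  have "(\<Sum>x\<in>cube n. (v x)\<^sup>2) = (\<Sum>x\<in>cube n. if card x = k then c\<^sup>2 else 0)"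
    by (rule sum.cong) (auto simp: v_def)
  also have "\<dots> = (\<Sum>x\<in>{x\<in>cube n. card x = k}. c\<^sup>2)"
    by (rule sum.inter_filter[OF cube_finite, symmetric])
  also have "\<dots> = C * c\<^sup>2" using kn by (simp add: layer_card C_def)
  also have "\<dots> = 1" using Cpos by (simp add: c_def power_divide)
  finally have unit: "(\<Sum>x\<in>cube n. (v x)\<^sup>2) = 1" .
  have Av: "(\<Sum>y\<in>cube n. sens_adj n f x y * v y) = real (Suc k) * c"
    if x: "x \<in> cube n" "card x = Suc k" for x
  proof -
    have "(\<Sum>y\<in>cube n. sens_adj n f x y * v y) = (\<Sum>y\<in>cube n. if y \<subseteq> x \<and> card y = k then c else 0)"
    proof (rule sum.cong[OF refl])
      fix y assume y: "y \<in> cube n"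
      show "sens_adj n f x y * v y = (if y \<subseteq> x \<and> card y = k then c else 0)"
      proof (cases "card y = k")
        case True
        have "f x \<noteq> f y" using diff x y True by blast
        then show ?thesis using True x y symdiff_one[of x y k] cube_fin
          by (auto simp: sens_adj_def v_def)
      qed (simp add: v_def)
    qed
    also have "\<dots> = (\<Sum>y\<in>{y\<in>cube n. y \<subseteq> x \<and> card y = k}. c)"
      by (rule sum.inter_filter[OF cube_finite, symmetric])
    also have "{y\<in>cube n. y \<subseteq> x \<and> card y = k} = {B. B \<subseteq> x \<and> card B = k}"
      using x by (auto simp: cube_def)
    also have "(\<Sum>y\<in>{B. B \<subseteq> x \<and> card B = k}. c) = real (Suc k) * c"
      using x cube_fin[OF x(1)] by (simp add: n_subsets)
    finally show ?thesis .
  qed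
  have "(\<Sum>x\<in>{x\<in>cube n. card x = Suc k}. (\<Sum>y\<in>cube n. sens_adj n f x y * v y)\<^sup>2)
      \<le> (\<Sum>x\<in>cube n. (\<Sum>y\<in>cube n. sens_adj n f x y * v y)\<^sup>2)"
    by (rule sum_mono2) (auto simp: cube_finite)
  moreover have "(\<Sum>x\<in>{x\<in>cube n. card x = Suc k}. (\<Sum>y\<in>cube n. sens_adj n f x y * v y)\<^sup>2)
      = (\<Sum>x\<in>{x\<in>cube n. card x = Suc k}. (real (Suc k) * c)\<^sup>2)"
    by (rule sum.cong) (auto simp: Av)
  moreover have "\<dots> = real (n choose Suc k) * (real (Suc k) * c)\<^sup>2"
    using kn by (simp add: layer_card)
  moreover have "real (n choose Suc k) * (real (Suc k) * c)\<^sup>2 = real (Suc k) * real (n - k)"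
  proof -
    obtain m where m: "n = Suc m" using kn by (cases n) auto
    have "Suc k * (n choose Suc k) = n * (m choose k)" using Suc_times_binomial[of k m] m by simp
    also have "\<dots> = (n - k) * (n choose k)" using binomial_absorb_comp[of n k] m by simp
    finally have e: "real (Suc k) * real (n choose Suc k) = real (n - k) * C"
      unfolding C_def by (metis of_nat_mult)
    have "real (n choose Suc k) * (real (Suc k) * c)\<^sup>2
        = (real (Suc k) * real (n choose Suc k)) * real (Suc k) * c\<^sup>2"
      by (simp add: power2_eq_square)
    also have "\<dots> = real (n - k) * C * real (Suc k) * c\<^sup>2" by (simp only: e)
    also have "\<dots> = real (Suc k) * real (n - k)" using Cpos by (simp add: c_def power_divide)
    finally show ?thesis .
  qed
  ultimately have "real (Suc k) * real (n - k) \<le> (\<Sum>x\<in>cube n. (\<Sum>y\<in>cube n. sens_adj n f x y * v y)\<^sup>2)"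
    by linarith
  then have "sqrt (real (Suc k) * real (n - k)) \<le> sqrt (\<Sum>x\<in>cube n. (\<Sum>y\<in>cube n. sens_adj n f x y * v y)\<^sup>2)"
    by simp
  also have "\<dots> \<le> spectral_sensitivity n f" by (rule sup_ge[OF unit])
  finally show ?thesis .
qed

lemma discrete_ivt:
  fixes g :: "nat \<Rightarrow> bool"
  shows "a < b \<Longrightarrow> g a \<noteq> g b \<Longrightarrow> \<exists>k. a \<le> k \<and> k < b \<and> g k \<noteq> g (Suc k)"
proof (induction b)
  case 0 then show ?case by simp
next
  case (Suc b)
  show ?case
  proof (cases "g b = g (Suc b)")
    case True
    then have "a < b" using Suc by (metis less_SucE)
    with Suc True obtain k where "a \<le> k \<and> k < b \<and> g k \<noteq> g (Suc k)" by auto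
    then show ?thesis by (intro exI[of _ k]) auto
  next
    case False
    then show ?thesis using Suc by (intro exI[of _ b]) auto
  qed
qed

lemma t_f_bound: "t_f n f \<le> Suc (n div 2)"
  unfolding t_f_def by (rule Least_le) auto

lemma part1:
  assumes sym: "symmetric_bf n f" and nc: "nonconstant_bf n f"
  shows "sqrt (real (t_f n f) * (real n + 1 - real (t_f n f))) \<le> spectral_sensitivity n f"
proof (cases "t_f n f = 0")
  case True
  then show ?thesis using spec_nonneg by simp
next
  case False
  define t where "t = t_f n f"
  define P where "P t \<longleftrightarrow> (\<forall>x\<in>cube n. \<forall>y\<in>cube n.
      t \<le> card x \<and> card x + t \<le> n \<and> t \<le> card y \<and> card y + t \<le> n \<longrightarrow> f x = f y)" for t
  have tdef: "t = (LEAST t. P t)" unfolding t_def t_f_def P_def by simp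
  have tpos: "t > 0" using False t_def by simp
  have "\<not> P (t - 1)" unfolding tdef by (rule not_less_Least) (use tpos tdef in simp)
  then obtain x y where xy: "x \<in> cube n" "y \<in> cube n" "t - 1 \<le> card x" "card x + (t - 1) \<le> n"
    "t - 1 \<le> card y" "card y + (t - 1) \<le> n" "f x \<noteq> f y"
    unfolding P_def by blast
  define g where "g j = f {..<j}" for j
  have fg: "f z = g (card z)" if "z \<in> cube n" for z
  proof -
    have "{..<card z} \<in> cube n" using cube_card_le[OF that] by (auto simp: cube_def)
    note h = this
    have s: "\<forall>x\<in>cube n. \<forall>y\<in>cube n. card x = card y \<longrightarrow> f x = f y"
      using sym unfolding symmetric_bf_def by blast
    have "f z = f {..<card z}" by (rule s[rule_format, OF that h]) simp
    then show ?thesis unfolding g_def .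
  qed
  have gxy: "g (card x) \<noteq> g (card y)" using xy(7) fg[OF xy(1)] fg[OF xy(2)] by simp
  have "\<exists>k. t - 1 \<le> k \<and> k + 1 + (t - 1) \<le> n \<and> g k \<noteq> g (Suc k)"
  proof (cases "card x < card y")
    case True
    then obtain k where "card x \<le> k \<and> k < card y \<and> g k \<noteq> g (Suc k)"
      using discrete_ivt[OF True gxy] by blast
    then show ?thesis using xy by (intro exI[of _ k]) linarith
  next
    case False
    have "card x \<noteq> card y" using gxy by metis
    with False have lt: "card y < card x" by linarith
    have gyx: "g (card y) \<noteq> g (card x)" using gxy by metis
    then obtain k where "card y \<le> k \<and> k < card x \<and> g k \<noteq> g (Suc k)"
      using discrete_ivt[OF lt gyx] by blast
    then show ?thesis using xy by (intro exI[of _ k]) linarith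
  qed
  then obtain k where k: "t - 1 \<le> k" "k + 1 + (t - 1) \<le> n" "g k \<noteq> g (Suc k)" by blast
  have kn: "k < n" using k tpos by linarith
  have diff: "\<forall>x\<in>cube n. \<forall>y\<in>cube n. card x = Suc k \<longrightarrow> card y = k \<longrightarrow> f x \<noteq> f y"
  proof (intro ballI impI)
    fix x' y' assume "x' \<in> cube n" "y' \<in> cube n" "card x' = Suc k" "card y' = k"
    then show "f x' \<noteq> f y'" using fg k(3) by simp
  qed
  have lb: "sqrt (real (Suc k) * real (n - k)) \<le> spectral_sensitivity n f"
    by (rule layer_bound[OF kn diff])
  have ar: "real t * (real n + 1 - real t) \<le> real (Suc k) * real (n - k)"
  proof -
    have h1: "real t \<le> real (Suc k)" using k tpos by linarith
    have h2: "real (Suc k) \<le> real n + 1 - real t" using k tpos by linarith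
    have "0 \<le> (real (Suc k) - real t) * (real n + 1 - real t - real (Suc k))"
      using h1 h2 by simp
    moreover have "real (n - k) = real n - real k" using kn by simp
    ultimately show ?thesis by (simp add: algebra_simps)
  qed
  show ?thesis unfolding t_def[symmetric] by (rule order_trans[OF real_sqrt_le_mono[OF ar] lb])
qed

theorem mainTheorem3:
  shows "(\<forall>n f. symmetric_bf n f \<and> nonconstant_bf n f \<longrightarrow>
            spectral_sensitivity n f \<ge> sqrt (real (t_f n f) * (real n + 1 - real (t_f n f))))
       \<and> (\<exists>c>0. \<forall>n f. symmetric_bf n f \<and> nonconstant_bf n f \<longrightarrow>
            spectral_sensitivity n f \<ge> c * sqrt (real (t_f n f) * real n))"
proof (intro conjI allI impI)
  fix n f assume "symmetric_bf n f \<and> nonconstant_bf n f"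
  then show "spectral_sensitivity n f \<ge> sqrt (real (t_f n f) * (real n + 1 - real (t_f n f)))"
    using part1 by blast
next
  show "\<exists>c>0. \<forall>n f. symmetric_bf n f \<and> nonconstant_bf n f \<longrightarrow>
            spectral_sensitivity n f \<ge> c * sqrt (real (t_f n f) * real n)"
  proof (intro exI[of _ "1 / sqrt 2"] conjI allI impI)
    show "(0::real) < 1 / sqrt 2" by simp
    fix n f assume a: "symmetric_bf n f \<and> nonconstant_bf n f"
    define t where "t = t_f n f"
    have tb: "2 * real t \<le> real n + 2" using t_f_bound[of n f] unfolding t_def by linarith
    have "1 / sqrt 2 * sqrt (real t * real n) = sqrt (real t * real n / 2)"
      by (simp add: real_sqrt_divide)
    also have "\<dots> \<le> sqrt (real t * (real n + 1 - real t))"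
    proof (rule real_sqrt_le_mono)
      have "0 \<le> real t * (real n + 2 - 2 * real t)" using tb by simp
      then show "real t * real n / 2 \<le> real t * (real n + 1 - real t)" by (simp add: algebra_simps)
    qed
    also have "\<dots> \<le> spectral_sensitivity n f" using part1 a t_def by blast
    finally show "spectral_sensitivity n f \<ge> 1 / sqrt 2 * sqrt (real (t_f n f) * real n)"
      by (simp add: t_def)
  qed
qed

end
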